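(* Let $d_1,d_2,\alpha,\beta>0$ be fixed, let $u_c=\tfrac12$, and for $\mu>0$ define $$k_c^2=\sqrt{\frac{\mu\beta}{d_1d_2}},\quad \chi_c=\frac{\mu d_2+\beta d_1+2\sqrt{d_1d_2\mu\beta}}{\alpha u_c(1-u_c)},\quad M=\frac{\beta+k_c^2d_2}{\alpha},\quad M^*=\frac{\alpha}{\mu+d_1k_c^2},$$ $$G(\mu)=\frac14\chi_cM^2k_c^2-4\mu M^3+\frac{2\mu^2M^3(\beta+4k_c^2d_2)}{\alpha\chi_ck_c^2-(\mu+4k_c^2d_1)(\beta+4k_c^2d_2)},\qquad L(\mu)=\frac{G(\mu)\,M^*}{1+MM^*}.$$ Then the cubic Stuart–Landau amplitude equation $\frac{dA}{dT_2}=\sigma A-L(\mu)A^3$ (with $\sigma>0$) is supercritical, i.e. $L(\mu)>0$, for all sufficiently small $\mu>0$, and subcritical, i.e. $L(\mu)<0$, for all sufficiently large $\mu$.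
   Context: This concerns the volume-filling chemotaxis system $u_t=(d_1u_x-\chi u(1-u)v_x)_x+\mu u(1-u/u_c)$, $v_t=d_2v_{xx}+\alpha u-\beta v$ near the uniform steady state $(u_c,\alpha u_c/\beta)$, where $\chi_c$ is the critical chemotactic coefficient and $k_c$ the critical wavenumber. In the weakly nonlinear expansion $\chi=\chi_c+\varepsilon^2\chi_2+\dots$, the amplitude $A$ of the leading-order pattern $\varepsilon A\,(M,1)^T\cos(k_cx)$ obeys $\frac{dA}{dT_2}=\sigma A-LA^3$ with $\sigma=\frac{k_c^2\chi_2u_c(1-u_c)M^*}{1+MM^*}>0$ and, for $u_c=\tfrac12$, the Landau coefficient $L$ given by the displayed formula. The equation is called supercritical if $L>0$ and subcritical if $L<0$. *)

theory Defs
  imports "HOL-Analysis.Analysis"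
begin

definition uc :: real where "uc = 1/2"

definition kc2 :: "real \<Rightarrow> real \<Rightarrow> real \<Rightarrow> real \<Rightarrow> real \<Rightarrow> real" where
  "kc2 d1 d2 \<alpha> \<beta> \<mu> = sqrt (\<mu> * \<beta> / (d1 * d2))"

definition chic :: "real \<Rightarrow> real \<Rightarrow> real \<Rightarrow> real \<Rightarrow> real \<Rightarrow> real" where
  "chic d1 d2 \<alpha> \<beta> \<mu> =
     (\<mu> * d2 + \<beta> * d1 + 2 * sqrt (d1 * d2 * \<mu> * \<beta>)) / (\<alpha> * uc * (1 - uc))"

definition Mc :: "real \<Rightarrow> real \<Rightarrow> real \<Rightarrow> real \<Rightarrow> real \<Rightarrow> real" where
  "Mc d1 d2 \<alpha> \<beta> \<mu> = (\<beta> + kc2 d1 d2 \<alpha> \<beta> \<mu> * d2) / \<alpha>"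

definition Mstar :: "real \<Rightarrow> real \<Rightarrow> real \<Rightarrow> real \<Rightarrow> real \<Rightarrow> real" where
  "Mstar d1 d2 \<alpha> \<beta> \<mu> = \<alpha> / (\<mu> + d1 * kc2 d1 d2 \<alpha> \<beta> \<mu>)"

definition Gfun :: "real \<Rightarrow> real \<Rightarrow> real \<Rightarrow> real \<Rightarrow> real \<Rightarrow> real" where
  "Gfun d1 d2 \<alpha> \<beta> \<mu> =
    (let k2 = kc2 d1 d2 \<alpha> \<beta> \<mu>; chi = chic d1 d2 \<alpha> \<beta> \<mu>; M = Mc d1 d2 \<alpha> \<beta> \<mu> in
      1/4 * chi * M^2 * k2 - 4 * \<mu> * M^3
      + 2 * \<mu>^2 * M^3 * (\<beta> + 4 * k2 * d2)
        / (\<alpha> * chi * k2 - (\<mu> + 4 * k2 * d1) * (\<beta> + 4 * k2 * d2)))"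

definition Lfun :: "real \<Rightarrow> real \<Rightarrow> real \<Rightarrow> real \<Rightarrow> real \<Rightarrow> real" where
  "Lfun d1 d2 \<alpha> \<beta> \<mu> =
    Gfun d1 d2 \<alpha> \<beta> \<mu> * Mstar d1 d2 \<alpha> \<beta> \<mu>
      / (1 + Mc d1 d2 \<alpha> \<beta> \<mu> * Mstar d1 d2 \<alpha> \<beta> \<mu>)"

definition supercritical :: "real \<Rightarrow> bool" where "supercritical L \<longleftrightarrow> L > 0"
definition subcritical :: "real \<Rightarrow> bool" where "subcritical L \<longleftrightarrow> L < 0"

end

theory Submission
  imports Defs
begin

lemma key:
  fixes d1 d2 \<alpha> a b :: real
  assumes d1: "d1 > 0" and d2: "d2 > 0" and al: "\<alpha> > 0" and a: "a > 0" and b: "b > 0"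
  shows "\<exists>c>0. Lfun d1 d2 \<alpha> (b^2/d1) (a^2/d2) = c * (b^2 - 29/9*a*b - 8/9*a^2)"
proof -
  let ?\<beta> = "b^2/d1" and ?\<mu> = "a^2/d2"
  have k: "kc2 d1 d2 \<alpha> ?\<beta> ?\<mu> = a*b/(d1*d2)"
  proof -
    have "?\<mu> * ?\<beta> / (d1*d2) = (a*b/(d1*d2))^2" using d1 d2 by (simp add: field_simps power2_eq_square)
    thus ?thesis unfolding kc2_def using a b d1 d2 by simp
  qed
  have s: "sqrt (d1 * d2 * ?\<mu> * ?\<beta>) = a*b"
  proof -
    have "d1 * d2 * ?\<mu> * ?\<beta> = (a*b)^2" using d1 d2 by (simp add: field_simps power2_eq_square)
    thus ?thesis using a b by simp
  qed
  have chi: "chic d1 d2 \<alpha> ?\<beta> ?\<mu> = 4*(a+b)^2/\<alpha>"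
    unfolding chic_def s uc_def using d1 d2 al by (simp add: field_simps power2_eq_square)
  have M: "Mc d1 d2 \<alpha> ?\<beta> ?\<mu> = b*(a+b)/(\<alpha>*d1)"
    unfolding Mc_def k using d1 d2 al by (simp add: field_simps power2_eq_square)
  have Ms: "Mstar d1 d2 \<alpha> ?\<beta> ?\<mu> = \<alpha>*d2/(a*(a+b))"
    unfolding Mstar_def k using d1 d2 al a b by (simp add: field_simps power2_eq_square)
  have D: "\<alpha> * (4*(a+b)^2/\<alpha>) * (a*b/(d1*d2)) - (?\<mu> + 4 * (a*b/(d1*d2)) * d1) * (?\<beta> + 4 * (a*b/(d1*d2)) * d2)
        = -9*a^2*b^2/(d1*d2)"
    using d1 d2 al by (simp add: field_simps power2_eq_square)
  define M where "M = b*(a+b)/(\<alpha>*d1)"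
  define F where "F = a*(a+b)/(\<alpha>*d1*d2)"
  have T1: "1/4 * (4*(a+b)^2/\<alpha>) * M^2 * (a*b/(d1*d2)) = M^2 * F * (b*(a+b))"
    unfolding F_def using d1 d2 al by (simp add: field_simps power2_eq_square)
  have T2: "4 * ?\<mu> * M^3 = M^2 * F * (4*a*b)"
  proof -
    have "4 * ?\<mu> * M^3 = M^2 * (4 * ?\<mu> * M)" by (simp add: power2_eq_square power3_eq_cube)
    also have "4 * ?\<mu> * M = F * (4*a*b)" unfolding F_def M_def using d1 d2 al
      by (simp add: field_simps power2_eq_square)
    finally show ?thesis by simp
  qed
  have T3: "2 * ?\<mu>^2 * M^3 * (?\<beta> + 4 * (a*b/(d1*d2)) * d2) / (-9*a^2*b^2/(d1*d2))
      = - (M^2 * F * (2*a*(b+4*a)/9))"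
  proof -
    have "2 * ?\<mu>^2 * M^3 * (?\<beta> + 4 * (a*b/(d1*d2)) * d2) / (-9*a^2*b^2/(d1*d2))
       = M^2 * (2 * ?\<mu>^2 * M * (?\<beta> + 4 * (a*b/(d1*d2)) * d2) / (-9*a^2*b^2/(d1*d2)))"
      by (simp add: power2_eq_square power3_eq_cube)
    also have "2 * ?\<mu>^2 * M * (?\<beta> + 4 * (a*b/(d1*d2)) * d2) / (-9*a^2*b^2/(d1*d2))
       = - (F * (2*a*(b+4*a)/9))" unfolding F_def M_def using d1 d2 al a b
      by (simp add: field_simps power2_eq_square)
    finally show ?thesis by simp
  qed
  have G: "Gfun d1 d2 \<alpha> ?\<beta> ?\<mu> = M^2 * F * (b^2 - 29/9*a*b - 8/9*a^2)"
  proof -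
    have "Gfun d1 d2 \<alpha> ?\<beta> ?\<mu> = 1/4 * (4*(a+b)^2/\<alpha>) * M^2 * (a*b/(d1*d2)) - 4 * ?\<mu> * M^3
      + 2 * ?\<mu>^2 * M^3 * (?\<beta> + 4 * (a*b/(d1*d2)) * d2) / (-9*a^2*b^2/(d1*d2))"
      unfolding Gfun_def Let_def k chi M M_def[symmetric] D by simp
    also have "\<dots> = M^2 * F * (b*(a+b) - 4*a*b - 2*a*(b+4*a)/9)"
      unfolding T1 T2 T3 by (simp add: algebra_simps)
    also have "\<dots> = M^2 * F * (b^2 - 29/9*a*b - 8/9*a^2)"
      by (simp add: algebra_simps power2_eq_square)
    finally show ?thesis .
  qed
  have Fp: "F > 0" unfolding F_def using a b al d1 d2 by simp
  have Mp: "M > 0" unfolding M_def using a b al d1 by simp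
  have Msp: "\<alpha>*d2/(a*(a+b)) > 0" using a b al d2 by simp
  define S where "S = \<alpha>*d2/(a*(a+b))"
  let ?c = "M^2 * F * S / (1 + M * S)"
  have "?c > 0" using Mp Msp Fp unfolding S_def[symmetric] by (intro divide_pos_pos mult_pos_pos) (auto intro: add_pos_pos)
  moreover have "Lfun d1 d2 \<alpha> ?\<beta> ?\<mu> = ?c * (b^2 - 29/9*a*b - 8/9*a^2)"
    unfolding Lfun_def G Ms M M_def[symmetric] S_def[symmetric] by simp
  ultimately show ?thesis by blast
qed

lemma sign:
  fixes d1 d2 \<alpha> \<beta> \<mu> :: real
  assumes d1: "d1 > 0" and d2: "d2 > 0" and al: "\<alpha> > 0" and be: "\<beta> > 0" and mu: "\<mu> > 0"
  shows "\<exists>c>0. Lfun d1 d2 \<alpha> \<beta> \<mu> = c * ((sqrt (\<beta>*d1))^2 - 29/9* sqrt (\<mu>*d2)* sqrt (\<beta>*d1) - 8/9*(sqrt (\<mu>*d2))^2)"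
proof -
  have e: "(sqrt (\<beta>*d1))^2/d1 = \<beta>" "(sqrt (\<mu>*d2))^2/d2 = \<mu>" using d1 d2 be mu by auto
  have "\<exists>c>0. Lfun d1 d2 \<alpha> ((sqrt (\<beta>*d1))^2/d1) ((sqrt (\<mu>*d2))^2/d2) = c * ((sqrt (\<beta>*d1))^2 - 29/9* sqrt (\<mu>*d2)* sqrt (\<beta>*d1) - 8/9*(sqrt (\<mu>*d2))^2)"
    by (rule key) (use d1 d2 al be mu in auto)
  thus ?thesis unfolding e .
qed

theorem mainTheorem2:
  fixes d1 d2 \<alpha> \<beta> :: real
  assumes "d1 > 0" and "d2 > 0" and "\<alpha> > 0" and "\<beta> > 0"
  shows "(\<forall>\<^sub>F \<mu> in at_right 0. supercritical (Lfun d1 d2 \<alpha> \<beta> \<mu>))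
       \<and> (\<forall>\<^sub>F \<mu> in at_top. subcritical (Lfun d1 d2 \<alpha> \<beta> \<mu>))"
proof
  define b where "b = sqrt (\<beta>*d1)"
  have bp: "b > 0" unfolding b_def using assms by simp
  show "\<forall>\<^sub>F \<mu> in at_right 0. supercritical (Lfun d1 d2 \<alpha> \<beta> \<mu>)"
    unfolding eventually_at_right_field
  proof (intro exI[of _ "\<beta>*d1/(16*d2)"] conjI allI impI)
    show "0 < \<beta>*d1/(16*d2)" using assms by simp
    fix \<mu> :: real assume h0: "0 < \<mu>" and h1: "\<mu> < \<beta>*d1/(16*d2)"
    note h = h0 h1
    define a where "a = sqrt (\<mu>*d2)"
    have ap: "a > 0" unfolding a_def using assms h by simp
    have "a^2 < b^2/16" unfolding a_def b_def using assms h by (simp add: field_simps)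
    hence "a^2 < (b/4)^2" by (simp add: power_divide)
    hence a4: "a < b/4" using bp power_less_imp_less_base[of a 2 "b/4"] by simp
    have ab: "a*b \<le> (b*b)/4" using a4 bp mult_right_mono[of a "b/4" b] by simp
    have aa: "a*a \<le> (b*b)/16" using a4 ap mult_mono[of a "b/4" a "b/4"] by simp
    have bb: "b*b > 0" using bp by simp
    have eq: "b^2 - 29/9*a*b - 8/9*a^2 = b*b - 29/9*(a*b) - 8/9*(a*a)"
      by (simp add: power2_eq_square mult.assoc)
    have pos: "b^2 - 29/9*a*b - 8/9*a^2 > 0" unfolding eq using ab aa bb by linarith
    obtain c where "c > 0" "Lfun d1 d2 \<alpha> \<beta> \<mu> = c * (b^2 - 29/9*a*b - 8/9*a^2)"
      using sign[of d1 d2 \<alpha> \<beta> \<mu>] assms h unfolding a_def b_def by auto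
    thus "supercritical (Lfun d1 d2 \<alpha> \<beta> \<mu>)" unfolding supercritical_def using pos by simp
  qed
  show "\<forall>\<^sub>F \<mu> in at_top. subcritical (Lfun d1 d2 \<alpha> \<beta> \<mu>)"
    unfolding eventually_at_top_dense
  proof (intro exI[of _ "2*\<beta>*d1/d2"] allI impI)
    fix \<mu> :: real assume h: "\<mu> > 2*\<beta>*d1/d2"
    have "2*\<beta>*d1/d2 > 0" using assms by simp
    hence mp: "\<mu> > 0" using h by linarith
    define a where "a = sqrt (\<mu>*d2)"
    have ap: "a > 0" unfolding a_def using assms mp by simp
    have "a^2 > 2*b^2" unfolding a_def b_def using assms h mp by (simp add: field_simps)
    moreover have "29/9*a*b \<ge> 0" using ap bp by simp
    moreover have "b^2 \<ge> 0" by simp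
    ultimately have neg: "b^2 - 29/9*a*b - 8/9*a^2 < 0" by linarith
    obtain c where "c > 0" "Lfun d1 d2 \<alpha> \<beta> \<mu> = c * (b^2 - 29/9*a*b - 8/9*a^2)"
      using sign[of d1 d2 \<alpha> \<beta> \<mu>] assms mp unfolding a_def b_def by auto
    thus "subcritical (Lfun d1 d2 \<alpha> \<beta> \<mu>)" unfolding subcritical_def using neg
      by (simp add: mult_pos_neg)
  qed
qed

end
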